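(* Let $0<q<1$ and $0\le p<1$. Let $\tilde P_n(x)=\sum_{k=0}^n\tilde b_{k,n}x^k$ ($n\ge0$) be the orthonormal polynomials (with positive leading coefficients) associated with the moment sequence $(\tilde s_n)$, and let $P_n(x;p,q)=\sum_{k=0}^n b_{k,n}x^k$ with $b_{k,n}$ as in the context. Then for $0\le k\le n$, \[ \tilde b_{k,n}=\tilde C_n (-1)^k\begin{bmatrix}n\\k\end{bmatrix}_q \frac{q^{k^2+k/2}}{(p;q)_k} \left[1-\frac{1-q^k}{1-pq^k}\frac{(q^{n+1};q)_\infty}{(pq^{n+1};q)_\infty}\right], \] where \[ \tilde C_n=(-1)^nq^{n/2+1/4}\sqrt{\frac{(p;q)_n}{(q;q)_n}} \left[\left(1-\frac{(q^n;q)_\infty}{(pq^n;q)_\infty}\right)\left(1-\frac{(q^{n+1};q)_\infty}{(pq^{n+1};q)_\infty}\right)\right]^{-1/2} =(-1)^nq^{n/2+1/4}\sqrt{\frac{(p;q)_{n+1}}{(q;q)_n}}\, \frac{(pq^{n+1};q)_\infty}{\sqrt{\Delta_n\Delta_{n+1}}}, \] i.e. \[ \tilde b_{k,n}=b_{k,n} \left[(pq^{n+1};q)_\infty-\frac{1-q^k}{1-pq^k}(q^{n+1};q)_\infty\right] \sqrt{\frac{1-pq^n}{\Delta_n\Delta_{n+1}}}. \] Moreover, for all $n\ge0$, \[ \tilde D_n=\frac{\Delta_{n+1}}{(pq^{n+1};q)_\infty}D_n, \] where $D_n=\det(s_{i+j})_{0\le i,j\le n}$ and $\tilde D_n=\det(\tilde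 s_{i+j})_{0\le i,j\le n}$.
   Context: For $a\in\mathbb C$ and $n\in\{0,1,\dots\}\cup\{\infty\}$, $(a;q)_n=\prod_{k=1}^n(1-aq^{k-1})$; $\begin{bmatrix}n\\k\end{bmatrix}_q=\frac{(q;q)_n}{(q;q)_k(q;q)_{n-k}}$. Set $\Delta_n=(pq^n;q)_\infty-(q^n;q)_\infty$ for $n\ge0$. The generalized Stieltjes–Wigert moments are $s_n=(p;q)_nq^{-(n+1)^2/2}$, $n\ge0$; the modified moments are $\tilde s_0=q^{-1/2}\bigl[1-(q;q)_\infty/(pq;q)_\infty\bigr]$ and $\tilde s_n=s_n$ for $n\ge1$ (these are the moments of the measure obtained from the N-extremal solution of the $(s_n)$ moment problem by removing its mass $(q;q)_\infty/(\sqrt q\,(pq;q)_\infty)$ at $0$). The orthonormal polynomials for a positive definite moment sequence $(u_n)$ are $P_n(x)=\frac{1}{\sqrt{E_{n-1}E_n}}\det\begin{pmatrix}u_0&\cdots&u_n\\ \vdots&&\vdots\\ u_{n-1}&\cdots&u_{2n-1}\\ 1&\cdots&x^n\end{pmatrix}$ with $E_n=\det(u_{i+j})_{0\le i,j\le n}$, $E_{-1}=1$. The orthonormal polynomials for $(s_n)$ are $P_n(x;p,q)=\sum_{k=0}^n b_{k,n}x^k$ with $b_{k,n}=(-1)^nq^{n/2+1/4}\sqrt{\frac{(p;q)_n}{(q;q)_n}}(-1)^k\begin{bmatrix}n\\k\end{bmatrix}_q\frac{q^{k^2+k/2}}{(p;q)_k}$. *)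

theory Defs
  imports "HOL-Analysis.Infinite_Products" "Jordan_Normal_Form.Determinant"
begin

definition qpoch :: "real \<Rightarrow> real \<Rightarrow> nat \<Rightarrow> real" where
  "qpoch a q n = (\<Prod>k=1..n. 1 - a * q ^ (k - 1))"

definition qpoch_inf :: "real \<Rightarrow> real \<Rightarrow> real" where
  "qpoch_inf a q = (\<Prod>k. 1 - a * q ^ k)"

definition qbinom :: "nat \<Rightarrow> nat \<Rightarrow> real \<Rightarrow> real" where
  "qbinom n k q = qpoch q q n / (qpoch q q k * qpoch q q (n - k))"

definition Delta :: "real \<Rightarrow> real \<Rightarrow> nat \<Rightarrow> real" where
  "Delta p q n = qpoch_inf (p * q ^ n) q - qpoch_inf (q ^ n) q"

definition sw_moment :: "real \<Rightarrow> real \<Rightarrow> nat \<Rightarrow> real" where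
  "sw_moment p q n = qpoch p q n * q powr (- (real (n + 1) ^ 2) / 2)"

definition sw_moment_mod :: "real \<Rightarrow> real \<Rightarrow> nat \<Rightarrow> real" where
  "sw_moment_mod p q n =
     (if n = 0 then q powr (-1/2) * (1 - qpoch_inf q q / qpoch_inf (p * q) q)
      else sw_moment p q n)"

definition hankel_det :: "(nat \<Rightarrow> real) \<Rightarrow> nat \<Rightarrow> real" where
  "hankel_det u n = det (mat (n + 1) (n + 1) (\<lambda>(i, j). u (i + j)))"

definition hankel_det_prev :: "(nat \<Rightarrow> real) \<Rightarrow> nat \<Rightarrow> real" where
  "hankel_det_prev u n = (if n = 0 then 1 else hankel_det u (n - 1))"

definition orthonormal_poly :: "(nat \<Rightarrow> real) \<Rightarrow> nat \<Rightarrow> real poly" where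
  "orthonormal_poly u n =
     smult (1 / sqrt (hankel_det_prev u n * hankel_det u n))
       (det (mat (n + 1) (n + 1)
          (\<lambda>(i, j). if i < n then [: u (i + j) :] else monom 1 j)))"

definition sw_coeff :: "real \<Rightarrow> real \<Rightarrow> nat \<Rightarrow> nat \<Rightarrow> real" where
  "sw_coeff p q k n =
     (-1) ^ n * q powr (real n / 2 + 1/4) * sqrt (qpoch p q n / qpoch q q n)
     * (-1) ^ k * qbinom n k q * q powr (real k ^ 2 + real k / 2) / qpoch p q k"

end

theory Submission
  imports Defs
begin
lemma det_lastcol:
  fixes A :: "'a::comm_ring_1 mat" and c :: "nat \<Rightarrow> 'a"
  assumes A: "A \<in> carrier_mat (Suc n) (Suc n)" and cn: "c n = 1"
    and orth: "\<And>i. i < n \<Longrightarrow> (\<Sum>j\<le>n. A $$ (i,j) * c j) = 0"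
  shows "det A = (\<Sum>j\<le>n. A $$ (n,j) * c j) * det (mat n n (\<lambda>(i,j). A $$ (i,j)))"
proof -
  define C where "C = mat (Suc n) (Suc n) (\<lambda>(i,j). if j = n then c i else if i = j then 1 else (0::'a))"
  have Cc: "C \<in> carrier_mat (Suc n) (Suc n)" unfolding C_def by simp
  have ut: "upper_triangular C" unfolding C_def upper_triangular_def by auto
  have "diag_mat C = replicate (Suc n) 1"
    unfolding C_def diag_mat_def using cn by (intro nth_equalityI, auto simp: nth_append nth_Cons split: nat.split)
  hence dC: "det C = 1" using det_upper_triangular[OF ut Cc] by simp
  define B where "B = A * C"
  have Bc: "B \<in> carrier_mat (Suc n) (Suc n)" unfolding B_def using A Cc by simp
  have dB: "det B = det A" unfolding B_def using det_mult[OF A Cc] dC by simp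
  have Bij: "B $$ (i,j) = (if j = n then (\<Sum>k\<le>n. A $$ (i,k) * c k) else A $$ (i,j))"
    if "i < Suc n" "j < Suc n" for i j
  proof -
    have "B $$ (i,j) = (\<Sum>k<Suc n. A $$ (i,k) * C $$ (k,j))"
      unfolding B_def using that A Cc by (simp add: scalar_prod_def row_def col_def lessThan_atLeast0)
    also have "\<dots> = (if j = n then (\<Sum>k\<le>n. A $$ (i,k) * c k) else A $$ (i,j))"
    proof (cases "j = n")
      case True thus ?thesis unfolding C_def by (simp add: lessThan_Suc_atMost)
    next
      case False
      have "(\<Sum>k<Suc n. A $$ (i,k) * C $$ (k,j)) = (\<Sum>k<Suc n. if k = j then A $$ (i,j) else 0)"
        by (rule sum.cong, auto simp: C_def False that)
      thus ?thesis using False that by simp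
    qed
    finally show ?thesis .
  qed
  have "det B = (\<Sum>i<Suc n. B $$ (i,n) * cofactor B i n)"
    by (rule laplace_expansion_column[OF Bc], simp)
  also have "\<dots> = B $$ (n,n) * cofactor B n n"
    using Bij orth by (simp add: lessThan_Suc)
  also have "cofactor B n n = det (mat n n (\<lambda>(i,j). A $$ (i,j)))"
  proof -
    have "mat_delete B n n = mat n n (\<lambda>(i,j). A $$ (i,j))"
      by (rule eq_matI, insert Bc, auto simp: mat_delete_def Bij)
    thus ?thesis unfolding cofactor_def by simp
  qed
  finally show ?thesis using dB Bij by simp
qed

interpretation cpoly: comm_ring_hom "\<lambda>x::real. [:x:]"
  by unfold_locales (auto simp: one_pCons)

lemma hankel_step:
  fixes u c :: "nat \<Rightarrow> real"
  assumes cn: "c n = 1" and orth: "\<And>i. i < n \<Longrightarrow> (\<Sum>j\<le>n. u (i+j) * c j) = 0"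
  shows "hankel_det u n = (\<Sum>j\<le>n. u (n+j) * c j) * hankel_det_prev u n"
    and "det (mat (n + 1) (n + 1)
          (\<lambda>(i, j). if i < n then [: u (i + j) :] else monom 1 j))
        = smult (hankel_det_prev u n) (\<Sum>j\<le>n. monom (c j) j)"
proof -
  have blk: "det (mat n n (\<lambda>(i,j). u (i+j))) = hankel_det_prev u n"
  proof (cases n)
    case 0 thus ?thesis unfolding hankel_det_prev_def by simp
  next
    case (Suc m) thus ?thesis unfolding hankel_det_prev_def hankel_det_def by simp
  qed
  define A where "A = mat (Suc n) (Suc n) (\<lambda>(i, j). u (i + j))"
  have "det A = (\<Sum>j\<le>n. A $$ (n,j) * c j) * det (mat n n (\<lambda>(i,j). A $$ (i,j)))"
    by (rule det_lastcol[where c=c], simp add: A_def, rule cn, simp add: A_def orth)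
  moreover have "mat n n (\<lambda>(i,j). A $$ (i,j)) = mat n n (\<lambda>(i,j). u (i+j))"
    by (rule eq_matI, auto simp: A_def)
  moreover have "(\<Sum>j\<le>n. A $$ (n,j) * c j) = (\<Sum>j\<le>n. u (n+j) * c j)"
    by (rule sum.cong, auto simp: A_def)
  ultimately show "hankel_det u n = (\<Sum>j\<le>n. u (n+j) * c j) * hankel_det_prev u n"
    unfolding hankel_det_def A_def using blk by simp
  define P where "P = mat (n + 1) (n + 1) (\<lambda>(i, j). if i < n then [: u (i + j) :] else monom (1::real) j)"
  have "det P = (\<Sum>j\<le>n. P $$ (n,j) * [:c j:]) * det (mat n n (\<lambda>(i,j). P $$ (i,j)))"
  proof (rule det_lastcol)
    show "P \<in> carrier_mat (Suc n) (Suc n)" by (simp add: P_def)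
    show "[:c n:] = 1" using cn by (simp add: one_pCons[symmetric])
    fix i assume i: "i < n"
    have "(\<Sum>j\<le>n. P $$ (i, j) * [:c j:]) = (\<Sum>j\<le>n. [:u (i+j) * c j:])"
      by (rule sum.cong, insert i, auto simp: P_def)
    also have "\<dots> = [:\<Sum>j\<le>n. u (i+j) * c j:]" by (rule sum_to_poly)
    finally show "(\<Sum>j\<le>n. P $$ (i, j) * [:c j:]) = 0" using orth[OF i] by simp
  qed
  moreover have "(\<Sum>j\<le>n. P $$ (n,j) * [:c j:]) = (\<Sum>j\<le>n. monom (c j) j)"
    by (rule sum.cong, auto simp: P_def intro!: poly_eqI simp: coeff_monom_mult coeff_monom)
  moreover have "mat n n (\<lambda>(i,j). P $$ (i,j)) = map_mat (\<lambda>x. [:x:]) (mat n n (\<lambda>(i,j). u (i+j)))"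
    by (rule eq_matI, auto simp: P_def)
  ultimately show "det (mat (n + 1) (n + 1)
          (\<lambda>(i, j). if i < n then [: u (i + j) :] else monom 1 j))
        = smult (hankel_det_prev u n) (\<Sum>j\<le>n. monom (c j) j)"
    unfolding P_def[symmetric] using blk by (simp add: mult.commute)
qed

lemma ortho_coeff:
  fixes u c :: "nat \<Rightarrow> real"
  assumes cn: "c n = 1" and orth: "\<And>i. i < n \<Longrightarrow> (\<Sum>j\<le>n. u (i+j) * c j) = 0"
    and prev: "hankel_det_prev u n > 0" and h: "(\<Sum>j\<le>n. u (n+j) * c j) > 0" and k: "k \<le> n"
  shows "coeff (orthonormal_poly u n) k = c k / sqrt (\<Sum>j\<le>n. u (n+j) * c j)"
proof -
  define h where "h = (\<Sum>j\<le>n. u (n+j) * c j)"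
  define E where "E = hankel_det_prev u n"
  have hd: "hankel_det u n = h * E" unfolding h_def E_def by (rule hankel_step(1)[OF cn orth])
  have ck: "coeff (\<Sum>j\<le>n. monom (c j) j) k = c k"
    using k by (simp add: coeff_sum coeff_monom)
  have op: "orthonormal_poly u n = smult (1 / sqrt (E * hankel_det u n)) (smult E (\<Sum>j\<le>n. monom (c j) j))"
    unfolding orthonormal_poly_def E_def using hankel_step(2)[OF cn orth] by simp
  have "coeff (orthonormal_poly u n) k = 1 / sqrt (E * (h * E)) * (E * c k)"
    unfolding op hd by (simp only: coeff_smult ck)
  also have "sqrt (E * (h * E)) = E * sqrt h" using prev h unfolding E_def h_def
    by (simp add: real_sqrt_mult)
  finally show ?thesis using prev unfolding h_def[symmetric] E_def by simp
qed

lemma qpoch_0[simp]: "qpoch a q 0 = 1" by (simp add: qpoch_def)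
lemma qpoch_Suc: "qpoch a q (Suc n) = qpoch a q n * (1 - a * q ^ n)"
  by (simp add: qpoch_def)
lemma qpoch_add: "qpoch a q (k + m) = qpoch a q k * qpoch (a * q ^ k) q m"
  by (induction m) (simp_all add: qpoch_Suc power_add mult.assoc)
lemma qpoch_pos: assumes "0 < q" "q < 1" "a < 1" shows "qpoch a q n > 0"
proof (induction n)
  case (Suc n)
  have "a * q ^ n < 1"
  proof (cases "a \<le> 0")
    case True thus ?thesis using assms by (smt (verit) mult_nonpos_nonneg zero_le_power)
  next
    case False
    have "q ^ n \<le> 1" using assms by (simp add: power_le_one)
    hence "a * q ^ n \<le> a" using False by (simp add: mult_left_le)
    thus ?thesis using assms by simp
  qed
  thus ?case using Suc by (simp add: qpoch_Suc)
qed simp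

definition qb :: "real \<Rightarrow> nat \<Rightarrow> nat \<Rightarrow> real" where
  "qb q n k = (if k \<le> n then qbinom n k q else 0)"

lemma qqpos: "0 < q \<Longrightarrow> q < 1 \<Longrightarrow> qpoch q q n > 0"
  by (rule qpoch_pos) auto

lemma qb_pascal:
  assumes q: "0 < q" "q < 1" and k: "1 \<le> k"
  shows "qb q (Suc n) k = qb q n k + q ^ (Suc n - k) * qb q n (k - 1)"
proof (cases "k \<le> n")
  case True
  obtain j m where jm: "k = Suc j" "n = j + m" "1 \<le> m" using k True
    by (metis Suc_le_D add_diff_inverse_nat le_add_diff_inverse2 less_eq_Suc_le nat_le_linear not_less_eq_eq zero_less_diff One_nat_def)
  obtain m' where m': "m = Suc m'" using jm(3) by (cases m) auto
  have P: "\<And>i. qpoch q q i > 0" using qqpos[OF q] .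
  have alg: "A * (1 - x * y) / (B * (1 - x) * (C * (1 - y))) = A / (B * (1 - x) * C) + y * (A / (B * (C * (1 - y))))"
    if "B \<noteq> 0" "C \<noteq> 0" "1 - x \<noteq> 0" "1 - y \<noteq> 0" for A B C x y :: real
  proof -
    have "A*(1-(1-a)*(1-b))/(B*a*(C*b)) = A/(B*a*C) + (1-b)*(A/(B*(C*b)))"
      if "a \<noteq> 0" "b \<noteq> 0" for a b
      using that \<open>B \<noteq> 0\<close> \<open>C \<noteq> 0\<close> by (simp add: field_simps)
    from this[of "1-x" "1-y"] show ?thesis using that by simp
  qed
  have Qn: "qpoch q q (Suc n) = qpoch q q n * (1 - q ^ (Suc j) * q ^ m)" using jm by (simp add: qpoch_Suc power_add)
  have Qk: "qpoch q q k = qpoch q q j * (1 - q ^ Suc j)" using jm by (simp add: qpoch_Suc)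
  have Qm: "qpoch q q m = qpoch q q m' * (1 - q ^ m)" using m' by (simp add: qpoch_Suc)
  have nz: "1 - q ^ Suc j \<noteq> 0" "1 - q ^ m \<noteq> 0"
    using P[of k] P[of m] Qk Qm by auto
  have e1: "Suc n - k = m" "n - k = m'" "n - (k - 1) = m" "k - 1 = j" using jm m' by auto
  have X: "qb q (Suc n) k = qpoch q q (Suc n) / (qpoch q q k * qpoch q q m)"
    unfolding qb_def qbinom_def using True e1 by simp
  have Y: "qb q n k = qpoch q q n / (qpoch q q k * qpoch q q m')"
    unfolding qb_def qbinom_def using True e1 by simp
  have Z: "qb q n j = qpoch q q n / (qpoch q q j * qpoch q q m)"
    unfolding qb_def qbinom_def using True e1 by simp
  show ?thesis unfolding X Y Z e1 Qn Qk Qm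
    by (rule alg) (use P[of j] P[of m'] nz in auto)
next
  case False
  show ?thesis
  proof (cases "k = Suc n")
    case True
    have "qpoch q q n > 0" "qpoch q q (Suc n) > 0" using qqpos[OF q] by auto
    thus ?thesis unfolding qb_def qbinom_def using True by simp
  next
    case False
    thus ?thesis using \<open>\<not> k \<le> n\<close> unfolding qb_def by auto
  qed
qed

lemma zero_choose_two[simp]: "(0::nat) choose 2 = 0" by (simp add: choose_two)

lemma choose2_Suc: "Suc k choose 2 = (k choose 2) + k"
  by (simp add: numeral_2_eq_2)

lemma qb_0: "0 < q \<Longrightarrow> q < 1 \<Longrightarrow> qb q n 0 = 1"
  unfolding qb_def qbinom_def using qqpos[of q n] by simp

lemma rothe:
  assumes q: "0 < q" "q < 1"
  shows "qpoch z q n = (\<Sum>k\<le>n. (-1) ^ k * qb q n k * q ^ (k choose 2) * z ^ k)"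
proof (induction n)
  case 0 have "(0::nat) choose 2 = 0" by (simp add: numeral_2_eq_2)
  thus ?case by (simp add: qb_0[OF q])
next
  case (Suc n)
  have "(\<Sum>k\<le>Suc n. (-1) ^ k * qb q (Suc n) k * q ^ (k choose 2) * z ^ k)
     = 1 + (\<Sum>k\<le>n. (-1) ^ Suc k * qb q (Suc n) (Suc k) * q ^ (Suc k choose 2) * z ^ Suc k)"
    by (subst sum.atMost_Suc_shift) (simp add: qb_0[OF q])
  also have "\<dots> = 1 + (\<Sum>k\<le>n. (-1) ^ Suc k * qb q n (Suc k) * q ^ (Suc k choose 2) * z ^ Suc k)
       + (\<Sum>k\<le>n. (-1) ^ Suc k * q ^ (n - k) * qb q n k * q ^ (Suc k choose 2) * z ^ Suc k)"
  proof -
    have "(\<Sum>k\<le>n. (-1) ^ Suc k * qb q (Suc n) (Suc k) * q ^ (Suc k choose 2) * z ^ Suc k)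
      = (\<Sum>k\<le>n. (-1) ^ Suc k * qb q n (Suc k) * q ^ (Suc k choose 2) * z ^ Suc k
          + (-1) ^ Suc k * q ^ (n - k) * qb q n k * q ^ (Suc k choose 2) * z ^ Suc k)"
      by (rule sum.cong, simp_all add: qb_pascal[OF q] algebra_simps)
    thus ?thesis by (simp only: sum.distrib add.assoc)
  qed
  also have "1 + (\<Sum>k\<le>n. (-1) ^ Suc k * qb q n (Suc k) * q ^ (Suc k choose 2) * z ^ Suc k)
      = (\<Sum>k\<le>n. (-1) ^ k * qb q n k * q ^ (k choose 2) * z ^ k)"
  proof -
    have "(\<Sum>k\<le>Suc n. (-1) ^ k * qb q n k * q ^ (k choose 2) * z ^ k)
      = 1 + (\<Sum>k\<le>n. (-1) ^ Suc k * qb q n (Suc k) * q ^ (Suc k choose 2) * z ^ Suc k)"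
      by (subst sum.atMost_Suc_shift) (simp add: qb_0[OF q])
    moreover have "(\<Sum>k\<le>Suc n. (-1) ^ k * qb q n k * q ^ (k choose 2) * z ^ k)
      = (\<Sum>k\<le>n. (-1) ^ k * qb q n k * q ^ (k choose 2) * z ^ k)"
      by (simp add: qb_def)
    ultimately show ?thesis by simp
  qed
  also have "(\<Sum>k\<le>n. (-1) ^ Suc k * q ^ (n - k) * qb q n k * q ^ (Suc k choose 2) * z ^ Suc k)
      = - (z * q ^ n) * (\<Sum>k\<le>n. (-1) ^ k * qb q n k * q ^ (k choose 2) * z ^ k)"
  proof -
    have "(-1) ^ Suc k * q ^ (n - k) * qb q n k * q ^ (Suc k choose 2) * z ^ Suc k
        = - (z * q ^ n) * ((-1) ^ k * qb q n k * q ^ (k choose 2) * z ^ k)" if "k \<le> n" for k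
    proof -
      have "q ^ (n - k) * q ^ (Suc k choose 2) = q ^ n * q ^ (k choose 2)"
      proof -
        have "q ^ (n - k) * q ^ (Suc k choose 2) = q ^ (n - k + k + (k choose 2))"
          by (simp add: choose2_Suc power_add)
        thus ?thesis using that by (simp add: power_add)
      qed
      thus ?thesis by (simp add: algebra_simps)
    qed
    hence "(\<Sum>k\<le>n. (-1) ^ Suc k * q ^ (n - k) * qb q n k * q ^ (Suc k choose 2) * z ^ Suc k)
      = (\<Sum>k\<le>n. - (z * q ^ n) * ((-1) ^ k * qb q n k * q ^ (k choose 2) * z ^ k))"
      by (intro sum.cong) auto
    thus ?thesis by (simp only: sum_distrib_left)
  qed
  finally show ?case using Suc by (simp add: qpoch_Suc algebra_simps)
qed

lemma qpoch_r_zero: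
  assumes q: "0 < q" and j: "j < n"
  shows "qpoch ((1/q) ^ j) q n = 0"
  unfolding qpoch_def
proof (rule prod_zero)
  show "finite {1..n}" by simp
  show "\<exists>a\<in>{1..n}. 1 - (1 / q) ^ j * q ^ (a - 1) = 0"
    using j q by (intro bexI[of _ "Suc j"]) (auto simp: power_one_over)
qed

lemma S_poly:
  assumes q: "0 < q" "q < 1" and deg: "degree f \<le> n"
  shows "(\<Sum>k\<le>n. (-1) ^ k * qb q n k * q ^ (k choose 2) * poly f ((1/q) ^ k))
       = coeff f n * qpoch ((1/q) ^ n) q n"
proof -
  have "(\<Sum>k\<le>n. (-1) ^ k * qb q n k * q ^ (k choose 2) * poly f ((1/q) ^ k))
     = (\<Sum>k\<le>n. \<Sum>j\<le>n. coeff f j * ((-1) ^ k * qb q n k * q ^ (k choose 2) * ((1/q) ^ j) ^ k))"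
  proof (rule sum.cong)
    fix k
    have "poly f ((1/q) ^ k) = (\<Sum>j\<le>n. coeff f j * ((1/q) ^ k) ^ j)"
      unfolding poly_altdef by (rule sum.mono_neutral_left) (use deg in \<open>auto simp: coeff_eq_0\<close>)
    thus "(-1) ^ k * qb q n k * q ^ (k choose 2) * poly f ((1/q) ^ k)
      = (\<Sum>j\<le>n. coeff f j * ((-1) ^ k * qb q n k * q ^ (k choose 2) * ((1/q) ^ j) ^ k))"
      by (simp add: sum_distrib_left power_mult[symmetric] mult.commute mult.left_commute)
  qed simp
  also have "\<dots> = (\<Sum>j\<le>n. coeff f j * qpoch ((1/q) ^ j) q n)"
    by (subst sum.swap) (simp add: sum_distrib_left[symmetric] rothe[OF q])
  also have "\<dots> = coeff f n * qpoch ((1/q) ^ n) q n"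
    by (subst sum.remove[of _ n]) (auto simp: qpoch_r_zero[OF q(1)] intro!: sum.neutral)
  finally show ?thesis .
qed

lemma linprod:
  fixes a :: "nat \<Rightarrow> real"
  shows "degree (\<Prod>i<m. [:-a i, 1:]) \<le> m \<and> coeff (\<Prod>i<m. [:-a i, 1:]) m = 1"
proof (induction m)
  case 0 thus ?case by simp
next
  case (Suc m)
  define P where "P = (\<Prod>i<m. [:-a i, 1:])"
  have eq: "(\<Prod>i<Suc m. [:-a i, 1:]) = smult (- a m) P + pCons 0 P"
    unfolding P_def by (simp add: mult_pCons_right)
  have d: "degree P \<le> m" "coeff P m = 1" using Suc unfolding P_def by auto
  have "degree (smult (- a m) P) \<le> Suc m" using degree_smult_le[of "- a m" P] d by linarith
  moreover have "degree (pCons 0 P) \<le> Suc m" using degree_pCons_le[of 0 P] d by linarith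
  ultimately have "degree (smult (- a m) P + pCons 0 P) \<le> Suc m"
    by (meson degree_add_le)
  moreover have "coeff (smult (- a m) P + pCons 0 P) (Suc m) = 1"
    using d by (simp add: coeff_eq_0)
  ultimately show ?case unfolding eq by simp
qed

lemma two_choose2: "2 * real (k choose 2) = real k * (real k - 1)"
  by (induction k) (simp_all add: choose2_Suc algebra_simps)

definition gk :: "real \<Rightarrow> real \<Rightarrow> nat \<Rightarrow> nat \<Rightarrow> real" where
  "gk p q n k = (-1) ^ k * qbinom n k q * q powr (real k ^ 2 + real k / 2) / qpoch p q k"

lemma qpoch_shift_prod:
  assumes "0 < q"
  shows "qpoch (p * q ^ k) q m * (1/q) ^ (k * m) = (\<Prod>i<m. (1/q) ^ k - p * q ^ i)"
proof (induction m)
  case 0 thus ?case by simp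
next
  case (Suc m)
  have "(1/q) ^ k * (1 - p * q ^ k * q ^ m) = (1/q) ^ k - p * q ^ m"
    using assms by (simp add: algebra_simps power_one_over)
  moreover have "qpoch (p * q ^ k) q (Suc m) * (1/q) ^ (k * Suc m)
      = (qpoch (p * q ^ k) q m * (1/q) ^ (k * m)) * ((1/q) ^ k * (1 - p * q ^ k * q ^ m))"
    by (simp add: qpoch_Suc power_add mult_ac)
  ultimately show ?case using Suc by simp
qed

lemma powr_comb:
  assumes q: "0 < q"
  shows "q powr (real k ^ 2 + real k / 2) * q powr (- (real (m + k + 1) ^ 2) / 2)
       = q powr (- (real (m + 1) ^ 2) / 2) * q ^ (k choose 2) * (1/q) ^ (k * m)"
proof -
  have a: "q ^ (k choose 2) = q powr (real (k choose 2))" using q by (simp add: powr_realpow)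
  have b0: "q powr (- real N) = (1/q) ^ N" for N
    using q by (simp add: powr_minus powr_realpow power_one_over inverse_eq_divide)
  have b: "(1/q) ^ (k * m) = q powr (- real (k * m))" by (rule b0[symmetric])
  have e: "real k ^ 2 + real k / 2 + (- (real (m + k + 1) ^ 2) / 2)
     = - (real (m + 1) ^ 2) / 2 + real (k choose 2) + (- real (k * m))"
  proof -
    have c: "real (k choose 2) = (real k * real k - real k) / 2" using two_choose2[of k] by (simp add: algebra_simps)
    show ?thesis unfolding c by (simp add: power2_eq_square field_simps)
  qed
  show ?thesis unfolding a b
    by (simp only: powr_add[symmetric] e)
qed

lemma L1:
  assumes q: "0 < q" "q < 1" and p: "p < 1" and k: "k \<le> n"
  shows "gk p q n k * sw_moment p q (m + k)
       = q powr (- (real (m + 1) ^ 2) / 2) *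
         ((-1) ^ k * qb q n k * q ^ (k choose 2) * poly (\<Prod>i<m. [:-(p * q ^ i), 1:]) ((1/q) ^ k))"
proof -
  have pk: "qpoch p q k > 0" using qpoch_pos[OF q p] .
  have s: "qpoch p q (m + k) = qpoch p q k * qpoch (p * q ^ k) q m"
    using qpoch_add[of p q k m] by (simp add: add.commute)
  have pp: "poly (\<Prod>i<m. [:-(p * q ^ i), 1:]) ((1/q) ^ k) = qpoch (p * q ^ k) q m * (1/q) ^ (k * m)"
    by (simp add: poly_prod qpoch_shift_prod[OF q(1)])
  have "gk p q n k * sw_moment p q (m + k)
      = (-1) ^ k * qb q n k * qpoch (p * q ^ k) q m *
        (q powr (real k ^ 2 + real k / 2) * q powr (- (real (m + k + 1) ^ 2) / 2))"
    unfolding gk_def sw_moment_def s qb_def using pk k by (simp add: field_simps)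
  also have "\<dots> = q powr (- (real (m + 1) ^ 2) / 2) *
         ((-1) ^ k * qb q n k * q ^ (k choose 2) * (qpoch (p * q ^ k) q m * (1/q) ^ (k * m)))"
    unfolding powr_comb[OF q(1)] by (simp add: algebra_simps)
  finally show ?thesis unfolding pp .
qed

lemma L2:
  assumes q: "0 < q" "q < 1" and p: "0 \<le> p" "p < 1" and k: "k \<le> n"
  shows "gk p q n k * ((1 - q ^ k) / (1 - p * q ^ k)) * sw_moment p q (Suc m + k)
       = q powr (- (real (Suc m + 1) ^ 2) / 2) *
         ((-1) ^ k * qb q n k * q ^ (k choose 2) *
           poly ([:-1, 1:] * (\<Prod>i<m. [:-(p * q ^ Suc i), 1:])) ((1/q) ^ k))"
proof -
  have pk: "qpoch p q k > 0" using qpoch_pos[OF q p(2)] .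
  have pqk: "1 - p * q ^ k > 0"
  proof -
    have "q ^ k \<le> 1" using q by (simp add: power_le_one)
    hence "p * q ^ k \<le> p" using p by (simp add: mult_left_le)
    thus ?thesis using p by simp
  qed
  have s: "qpoch p q (Suc m + k) = qpoch p q k * (1 - p * q ^ k) * qpoch ((p * q) * q ^ k) q m"
    using qpoch_add[of p q "Suc k" m] by (simp add: add.commute qpoch_Suc mult.assoc)
  have X: "(\<Prod>i<m. (1/q)^k - p*q^Suc i) = qpoch ((p*q)*q^k) q m * (1/q)^(k*m)"
    using qpoch_shift_prod[OF q(1), of "p*q" k m] by (simp add: mult.assoc)
  have pp0: "poly ([:-1, 1:] * (\<Prod>i<m. [:-(p * q ^ Suc i), 1:])) x = (x - 1) * (\<Prod>i<m. x - p*q^Suc i)" for x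
    by (simp add: poly_prod algebra_simps)
  have pp: "poly ([:-1, 1:] * (\<Prod>i<m. [:-(p * q ^ Suc i), 1:])) ((1/q) ^ k)
      = ((1/q) ^ k - 1) * (qpoch ((p * q) * q ^ k) q m * (1/q) ^ (k * m))"
    unfolding pp0 X ..
  have r: "(1 - q ^ k) * (1/q) ^ (k * Suc m) = ((1/q) ^ k - 1) * (1/q) ^ (k * m)"
    using q by (simp add: power_add power_one_over field_simps)
  have "gk p q n k * ((1 - q ^ k) / (1 - p * q ^ k)) * sw_moment p q (Suc m + k)
      = (-1) ^ k * qb q n k * qpoch ((p * q) * q ^ k) q m * (1 - q ^ k) *
        (q powr (real k ^ 2 + real k / 2) * q powr (- (real (Suc m + k + 1) ^ 2) / 2))"
    unfolding gk_def sw_moment_def s qb_def using pk pqk k by (simp add: field_simps)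
  also have "\<dots> = q powr (- (real (Suc m + 1) ^ 2) / 2) *
         ((-1) ^ k * qb q n k * q ^ (k choose 2) * (qpoch ((p * q) * q ^ k) q m * ((1 - q ^ k) * (1/q) ^ (k * Suc m))))"
    unfolding powr_comb[OF q(1)] by (simp add: algebra_simps)
  finally show ?thesis unfolding pp r by (simp add: algebra_simps)
qed

lemma qpoch_Suc': "qpoch z q (Suc n) = (1 - z) * qpoch (z * q) q n"
  using qpoch_add[of z q 1 n] by (simp add: qpoch_Suc)

lemma qpoch_pos': assumes "0 < q" "q < 1" "0 \<le> z" "z < 1" shows "qpoch z q n > 0"
  using qpoch_pos assms by auto

lemma one_choose_two: "Suc 0 choose 2 = 0"
  by (simp add: numeral_2_eq_2)

lemma Tid:
  assumes q: "0 < q" "q < 1"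
  shows "0 \<le> z \<Longrightarrow> z < 1 \<Longrightarrow>
    (\<Sum>j\<le>N. (-1) ^ j * qb q N j * q ^ (Suc j choose 2) / (1 - z * q ^ j)) = qpoch q q N / qpoch z q (Suc N)"
proof (induction N arbitrary: z)
  case 0
  have "q ^ (Suc 0 choose 2) = 1" by (simp add: one_choose_two)
  with 0 show ?case by (simp add: qb_0[OF q] qpoch_Suc)
next
  case (Suc N)
  define F where "F = (\<lambda>N z j. (-1) ^ j * qb q N j * q ^ (Suc j choose 2) / (1 - z * q ^ j))"
  have zq: "0 \<le> z * q" "z * q < 1" using Suc.prems q
    by (auto simp: mult_nonneg_nonneg) (smt (verit) mult_left_le)
  have IH1: "(\<Sum>j\<le>N. F N z j) = qpoch q q N / qpoch z q (Suc N)"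
    unfolding F_def using Suc.IH Suc.prems by blast
  have IH2: "(\<Sum>j\<le>N. F N (z*q) j) = qpoch q q N / qpoch (z*q) q (Suc N)"
    unfolding F_def using Suc.IH zq by blast
  have z1: "1 - z \<noteq> 0" using Suc.prems by simp
  have F0: "F M z 0 = 1 / (1 - z)" for M unfolding F_def by (simp add: qb_0[OF q] one_choose_two)
  have A: "(\<Sum>j\<le>Suc N. F (Suc N) z j) = 1 / (1 - z) + (\<Sum>j\<le>N. F (Suc N) z (Suc j))"
    by (subst sum.atMost_Suc_shift) (simp add: F0)
  have B: "(\<Sum>j\<le>N. F N z j) = 1 / (1 - z) + (\<Sum>j\<le>N. F N z (Suc j))"
  proof -
    have "(\<Sum>j\<le>Suc N. F N z j) = 1 / (1 - z) + (\<Sum>j\<le>N. F N z (Suc j))"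
      by (subst sum.atMost_Suc_shift) (simp add: F0)
    moreover have "(\<Sum>j\<le>Suc N. F N z j) = (\<Sum>j\<le>N. F N z j)"
      by (simp add: F_def qb_def)
    ultimately show ?thesis by simp
  qed
  have C: "F (Suc N) z (Suc j) = F N z (Suc j) + (- (q ^ Suc N)) * F N (z*q) j" if "j \<le> N" for j
  proof -
    have e: "q ^ (N - j) * q ^ (Suc (Suc j) choose 2) = q ^ Suc N * q ^ (Suc j choose 2)"
    proof -
      have "q ^ (N - j) * q ^ (Suc (Suc j) choose 2) = q ^ (N - j + Suc j + (Suc j choose 2))"
        by (simp add: choose2_Suc[of "Suc j"] power_add)
      thus ?thesis using that by (simp add: power_add)
    qed
    have "F (Suc N) z (Suc j) = (-1) ^ Suc j * qb q N (Suc j) * q ^ (Suc (Suc j) choose 2) / (1 - z * q ^ Suc j)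
       + (-1) ^ Suc j * (q ^ (N - j) * q ^ (Suc (Suc j) choose 2)) * qb q N j / (1 - z * q ^ Suc j)"
    proof -
      have "F (Suc N) z (Suc j) = ((-1) ^ Suc j * qb q N (Suc j) * q ^ (Suc (Suc j) choose 2)
          + (-1) ^ Suc j * (q ^ (N - j) * q ^ (Suc (Suc j) choose 2)) * qb q N j) / (1 - z * q ^ Suc j)"
        unfolding F_def by (simp add: qb_pascal[OF q] algebra_simps)
      thus ?thesis by (simp only: add_divide_distrib)
    qed
    also have "\<dots> = F N z (Suc j) + (- (q ^ Suc N)) * F N (z*q) j"
      unfolding e F_def by (simp add: algebra_simps)
    finally show ?thesis .
  qed
  have "(\<Sum>j\<le>Suc N. F (Suc N) z j) = (\<Sum>j\<le>N. F N z j) - q ^ Suc N * (\<Sum>j\<le>N. F N (z*q) j)"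
    unfolding A B by (simp add: C sum.distrib sum_distrib_left sum_subtractf)
  also have "\<dots> = qpoch q q (Suc N) / qpoch z q (Suc (Suc N))"
  proof -
    define X where "X = qpoch (z*q) q N"
    have X0: "X > 0" unfolding X_def using qpoch_pos'[OF q zq] .
    have e1: "qpoch z q (Suc N) = (1 - z) * X" unfolding X_def by (rule qpoch_Suc')
    have e2: "qpoch (z*q) q (Suc N) = X * (1 - z * q * q ^ N)" unfolding X_def by (rule qpoch_Suc)
    have e3: "qpoch z q (Suc (Suc N)) = (1 - z) * X * (1 - z * q * q ^ N)"
      unfolding qpoch_Suc'[of z q "Suc N"] e2 X_def by simp
    have nz: "1 - z * q * q ^ N > 0"
    proof -
      have "q ^ N \<le> 1" using q by (simp add: power_le_one)
      hence "z * q * q ^ N \<le> z * q" using zq by (simp add: mult_left_le)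
      thus ?thesis using zq by simp
    qed
    have gen: "Q/(a*X) - x*(Q/(X*b)) = Q*(1-x)/(a*X*b)"
      if "a \<noteq> 0" "b \<noteq> 0" "X \<noteq> 0" "b = 1 - (1-a)*x" for Q a b x X :: real
    proof -
      have "Q/(a*X) - x*(Q/(X*b)) = (Q*b - x*Q*a)/(a*X*b)" using that(1-3) by (simp add: field_simps)
      also have "Q*b - x*Q*a = Q*(1-x)" unfolding that(4) by (simp add: algebra_simps)
      finally show ?thesis .
    qed
    have "qpoch q q N / ((1-z)*X) - q ^ Suc N * (qpoch q q N / (X * (1 - z*q*q^N)))
       = qpoch q q N * (1 - q ^ Suc N) / ((1-z)*X*(1 - z*q*q^N))"
      by (rule gen) (use z1 nz X0 in auto)
    thus ?thesis unfolding IH1 IH2 e1 e2 e3 by (simp add: qpoch_Suc mult.assoc)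
  qed
  finally show ?case unfolding F_def .
qed

lemma qb_absorb:
  assumes q: "0 < q" "q < 1"
  shows "qb q (Suc N) (Suc j) * (1 - q ^ Suc j) = (1 - q ^ Suc N) * qb q N j"
proof (cases "j \<le> N")
  case True
  have P: "\<And>i. qpoch q q i > 0" using qqpos[OF q] .
  have e: "Suc N - Suc j = N - j" by simp
  show ?thesis unfolding qb_def qbinom_def using True P[of j] P[of "N-j"] P[of "Suc j"]
    by (simp add: qpoch_Suc field_simps)
qed (simp add: qb_def)

lemma Wid:
  assumes q: "0 < q" "q < 1" and p: "0 \<le> p" "p < 1"
  shows "(\<Sum>k\<le>Suc N. (-1) ^ k * qb q (Suc N) k * q ^ (k choose 2) * ((1 - q ^ k) / (1 - p * q ^ k)))
     = - qpoch q q (Suc N) / qpoch (p * q) q (Suc N)"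
proof -
  have pq: "0 \<le> p * q" "p * q < 1" using p q by (auto) (smt (verit) mult_left_le)
  have "(\<Sum>k\<le>Suc N. (-1) ^ k * qb q (Suc N) k * q ^ (k choose 2) * ((1 - q ^ k) / (1 - p * q ^ k)))
     = (\<Sum>j\<le>N. (-1) ^ Suc j * (qb q (Suc N) (Suc j) * (1 - q ^ Suc j)) * q ^ (Suc j choose 2) / (1 - (p * q) * q ^ j))"
    by (subst sum.atMost_Suc_shift) (simp add: mult_ac)
  also have "\<dots> = - (1 - q ^ Suc N) * (\<Sum>j\<le>N. (-1) ^ j * qb q N j * q ^ (Suc j choose 2) / (1 - (p * q) * q ^ j))"
    unfolding qb_absorb[OF q] by (simp add: sum_distrib_left algebra_simps)
  also have "\<dots> = - qpoch q q (Suc N) / qpoch (p * q) q (Suc N)"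
  proof -
    have g: "(x - 1) * Q / D = - (Q * (1 - x) / D)" for x Q D :: real
      by (metis minus_diff_eq minus_divide_left mult.commute mult_minus_right)
    show ?thesis unfolding Tid[OF q pq] by (simp add: qpoch_Suc g)
  qed
  finally show ?thesis .
qed

lemma qinf_conv:
  fixes a q :: real
  assumes q: "0 < q" "q < 1"
  shows "convergent_prod (\<lambda>k. 1 - a * q ^ k)"
proof -
  have "summable (\<lambda>k. norm ((1 - a * q ^ k) - 1))"
  proof -
    have "summable (\<lambda>k. \<bar>a\<bar> * q ^ k)" using q by (intro summable_mult summable_geometric) auto
    thus ?thesis using q by (simp add: abs_mult power_abs)
  qed
  hence "abs_convergent_prod (\<lambda>k. 1 - a * q ^ k)" by (rule summable_imp_abs_convergent_prod)
  thus ?thesis by (rule abs_convergent_prod_imp_convergent_prod)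
qed

lemma qinf_lim:
  assumes q: "0 < q" "q < 1"
  shows "(\<lambda>n. \<Prod>i\<le>n. 1 - a * q ^ i) \<longlonglongrightarrow> qpoch_inf a q"
  unfolding qpoch_inf_def by (rule convergent_prod_LIMSEQ[OF qinf_conv[OF q]])

lemma qinf_step:
  assumes q: "0 < q" "q < 1"
  shows "qpoch_inf a q = (1 - a) * qpoch_inf (a * q) q"
proof -
  have e: "(\<Prod>i\<le>Suc n. 1 - a * q ^ i) = (1 - a) * (\<Prod>i\<le>n. 1 - a * q * q ^ i)" for n
    by (subst prod.atMost_Suc_shift) (simp add: mult.assoc)
  have "(\<lambda>n. \<Prod>i\<le>Suc n. 1 - a * q ^ i) \<longlonglongrightarrow> qpoch_inf a q"
    using qinf_lim[OF q, of a] by (rule LIMSEQ_Suc)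
  moreover have "(\<lambda>n. \<Prod>i\<le>Suc n. 1 - a * q ^ i) \<longlonglongrightarrow> (1 - a) * qpoch_inf (a * q) q"
    unfolding e by (intro tendsto_mult tendsto_const qinf_lim[OF q])
  ultimately show ?thesis by (rule LIMSEQ_unique)
qed

lemma qinf_split:
  assumes q: "0 < q" "q < 1"
  shows "qpoch_inf a q = qpoch a q n * qpoch_inf (a * q ^ n) q"
proof (induction n)
  case (Suc n)
  have "qpoch_inf (a * q ^ n) q = (1 - a * q ^ n) * qpoch_inf (a * q ^ Suc n) q"
    using qinf_step[OF q, of "a * q ^ n"] by (simp add: mult_ac)
  thus ?case using Suc by (simp add: qpoch_Suc mult_ac)
qed simp

lemma qinf_one: assumes q: "0 < q" "q < 1" shows "qpoch_inf 1 q = 0"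
  using qinf_step[OF q, of 1] by simp

lemma qinf_pos:
  assumes q: "0 < q" "q < 1" and a: "0 \<le> a" "a < 1"
  shows "qpoch_inf a q > 0"
proof -
  have fac: "1 - a * q ^ i > 0" for i
  proof -
    have "q ^ i \<le> 1" using q by (simp add: power_le_one)
    hence "a * q ^ i \<le> a" using a by (simp add: mult_left_le)
    thus ?thesis using a by simp
  qed
  have "qpoch_inf a q \<noteq> 0" unfolding qpoch_inf_def
    by (rule prodinf_nonzero[OF qinf_conv[OF q]]) (use fac in \<open>auto simp: less_le\<close>)
  moreover have "qpoch_inf a q \<ge> 0"
    by (rule LIMSEQ_le_const[OF qinf_lim[OF q]]) (use fac in \<open>auto intro!: exI[of _ 0] prod_nonneg prod_pos less_imp_le\<close>)
  ultimately show ?thesis by simp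
qed

lemma qinf_mono:
  assumes q: "0 < q" "q < 1" and ab: "0 \<le> a" "a \<le> b" "b \<le> 1"
  shows "qpoch_inf b q \<le> qpoch_inf a q"
proof -
  have fac: "0 \<le> 1 - b * q ^ i \<and> 1 - b * q ^ i \<le> 1 - a * q ^ i" for i
  proof -
    have "q ^ i \<le> 1" "q ^ i \<ge> 0" using q by (auto simp: power_le_one)
    hence "b * q ^ i \<le> 1" using ab by (metis mult_le_one order_trans)
    moreover have "a * q ^ i \<le> b * q ^ i" using ab \<open>q ^ i \<ge> 0\<close> by (simp add: mult_right_mono)
    ultimately show ?thesis by simp
  qed
  show ?thesis
    by (rule LIMSEQ_le[OF qinf_lim[OF q] qinf_lim[OF q]])
       (use fac in \<open>auto intro!: exI[of _ 0] prod_mono\<close>)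
qed

lemma qinf_lt:
  assumes q: "0 < q" "q < 1" and p: "0 \<le> p" "p < 1"
  shows "qpoch_inf (q ^ j) q < qpoch_inf (p * q ^ j) q"
proof -
  have a: "qpoch_inf (q ^ j) q = (1 - q ^ j) * qpoch_inf (q ^ Suc j) q"
    using qinf_step[OF q, of "q ^ j"] by (simp add: mult_ac)
  have b: "qpoch_inf (p * q ^ j) q = (1 - p * q ^ j) * qpoch_inf (p * q ^ Suc j) q"
    using qinf_step[OF q, of "p * q ^ j"] by (simp add: mult_ac)
  have qj: "0 < q ^ j" "q ^ j \<le> 1" "0 < q ^ Suc j" "q ^ Suc j < 1" using q
    by (auto simp: power_le_one power_less_one_iff simp del: power_Suc)
  have pos: "qpoch_inf (p * q ^ Suc j) q > 0"
    by (rule qinf_pos[OF q]) (use p qj in \<open>auto simp del: power_Suc\<close>, smt (verit) mult_left_le qj(4) mult_nonneg_nonneg)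
  have le: "qpoch_inf (q ^ Suc j) q \<le> qpoch_inf (p * q ^ Suc j) q"
    by (rule qinf_mono[OF q]) (use p qj in \<open>auto simp del: power_Suc simp: mult_le_one\<close>)
  have "1 - q ^ j < 1 - p * q ^ j" using p qj by (smt (verit) mult_left_le mult_less_cancel_right2)
  moreover have "0 \<le> 1 - q ^ j" using qj by simp
  ultimately show ?thesis unfolding a b using pos le
    by (smt (verit) mult_le_cancel_left mult_strict_right_mono)
qed

definition AA :: "real \<Rightarrow> real \<Rightarrow> nat \<Rightarrow> real" where
  "AA p q j = qpoch_inf (q ^ j) q / qpoch_inf (p * q ^ j) q"

definition gt :: "real \<Rightarrow> real \<Rightarrow> nat \<Rightarrow> nat \<Rightarrow> real" where
  "gt p q n k = gk p q n k * (1 - (1 - q ^ k) / (1 - p * q ^ k) * AA p q (n + 1))"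

definition HH :: "real \<Rightarrow> nat \<Rightarrow> real" where
  "HH q n = q powr (- (real (n + 1) ^ 2) / 2) * qpoch ((1/q) ^ n) q n"

context
  fixes p q :: real
  assumes q: "0 < q" "q < 1" and p: "0 \<le> p" "p < 1"
begin

lemma sumG:
  assumes mn: "m \<le> n"
  shows "(\<Sum>k\<le>n. sw_moment p q (m + k) * gk p q n k)
       = q powr (- (real (m + 1) ^ 2) / 2) * (if m = n then qpoch ((1/q) ^ n) q n else 0)"
proof -
  define f where "f = (\<Prod>i<m. [:-(p * q ^ i), 1:])"
  have df: "degree f \<le> m" "coeff f m = 1" using linprod[of "\<lambda>i. p * q ^ i" m] unfolding f_def by auto
  have cf: "coeff f n = (if m = n then 1 else 0)"
    using df mn by (auto simp: coeff_eq_0)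
  have "(\<Sum>k\<le>n. sw_moment p q (m + k) * gk p q n k)
      = (\<Sum>k\<le>n. q powr (- (real (m + 1) ^ 2) / 2) *
         ((-1) ^ k * qb q n k * q ^ (k choose 2) * poly f ((1/q) ^ k)))"
    unfolding f_def by (rule sum.cong) (auto simp: L1[OF q p(2)] mult.commute[of "sw_moment _ _ _"])
  also have "\<dots> = q powr (- (real (m + 1) ^ 2) / 2) * (coeff f n * qpoch ((1/q) ^ n) q n)"
    by (simp add: sum_distrib_left[symmetric] S_poly[OF q] df(1) mn order.trans[OF df(1) mn])
  finally show ?thesis using cf by simp
qed

lemma sumR:
  assumes mn: "Suc m \<le> n"
  shows "(\<Sum>k\<le>n. sw_moment p q (Suc m + k) * (gk p q n k * ((1 - q ^ k) / (1 - p * q ^ k))))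
       = q powr (- (real (Suc m + 1) ^ 2) / 2) * (if Suc m = n then qpoch ((1/q) ^ n) q n else 0)"
proof -
  define a where "a = (\<lambda>i::nat. if i = 0 then 1 else p * q ^ i)"
  define f where "f = [:-1, 1:] * (\<Prod>i<m. [:-(p * q ^ Suc i), 1:])"
  have fe: "f = (\<Prod>i<Suc m. [:-a i, 1:])"
    unfolding f_def a_def by (subst prod.lessThan_Suc_shift) simp
  have df: "degree f \<le> Suc m" "coeff f (Suc m) = 1" using linprod[of a "Suc m"] unfolding fe by auto
  have cf: "coeff f n = (if Suc m = n then 1 else 0)"
    using df mn by (auto simp: coeff_eq_0)
  have "(\<Sum>k\<le>n. sw_moment p q (Suc m + k) * (gk p q n k * ((1 - q ^ k) / (1 - p * q ^ k))))
      = (\<Sum>k\<le>n. q powr (- (real (Suc m + 1) ^ 2) / 2) *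
         ((-1) ^ k * qb q n k * q ^ (k choose 2) * poly f ((1/q) ^ k)))"
    unfolding f_def
  proof (rule sum.cong)
    fix k assume "k \<in> {..n}"
    hence k: "k \<le> n" by simp
    from L2[OF q p k, of m] show "sw_moment p q (Suc m + k) * (gk p q n k * ((1 - q ^ k) / (1 - p * q ^ k)))
      = q powr (- (real (Suc m + 1) ^ 2) / 2) *
         ((-1) ^ k * qb q n k * q ^ (k choose 2) * poly ([:-1, 1:] * (\<Prod>i<m. [:-(p * q ^ Suc i), 1:])) ((1/q) ^ k))"
      by (metis mult.commute)
  qed simp
  also have "\<dots> = q powr (- (real (Suc m + 1) ^ 2) / 2) * (coeff f n * qpoch ((1/q) ^ n) q n)"
    by (simp add: sum_distrib_left[symmetric] S_poly[OF q] order.trans[OF df(1) mn])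
  finally show ?thesis using cf by simp
qed

lemma sumR0:
  "(\<Sum>k\<le>Suc N. sw_moment p q k * (gk p q (Suc N) k * ((1 - q ^ k) / (1 - p * q ^ k))))
     = q powr (-1/2) * (- qpoch q q (Suc N) / qpoch (p * q) q (Suc N))"
proof -
  have "(\<Sum>k\<le>Suc N. sw_moment p q k * (gk p q (Suc N) k * ((1 - q ^ k) / (1 - p * q ^ k))))
      = (\<Sum>k\<le>Suc N. q powr (-1/2) * ((-1) ^ k * qb q (Suc N) k * q ^ (k choose 2) * ((1 - q ^ k) / (1 - p * q ^ k))))"
  proof (rule sum.cong)
    fix k assume "k \<in> {..Suc N}"
    hence k: "k \<le> Suc N" by simp
    have "gk p q (Suc N) k * sw_moment p q (0 + k) = q powr (- (real (0 + 1) ^ 2) / 2) *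
         ((-1) ^ k * qb q (Suc N) k * q ^ (k choose 2) * poly (\<Prod>i<0. [:-(p * q ^ i), 1:]) ((1/q) ^ k))"
      by (rule L1[OF q p(2) k])
    thus "sw_moment p q k * (gk p q (Suc N) k * ((1 - q ^ k) / (1 - p * q ^ k)))
      = q powr (-1/2) * ((-1) ^ k * qb q (Suc N) k * q ^ (k choose 2) * ((1 - q ^ k) / (1 - p * q ^ k)))"
      by (simp add: algebra_simps)
  qed simp
  also have "\<dots> = q powr (-1/2) * (- qpoch q q (Suc N) / qpoch (p * q) q (Suc N))"
    by (simp only: sum_distrib_left[symmetric] Wid[OF q p])
  finally show ?thesis .
qed


lemma AA0: "AA p q 0 = 0"
  unfolding AA_def using qinf_one[OF q] by simp

lemma Pinf_pos: "qpoch_inf (p * q ^ j) q > 0"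
proof (rule qinf_pos[OF q])
  have "q ^ j \<le> 1" using q by (simp add: power_le_one)
  hence "p * q ^ j \<le> p" using p by (simp add: mult_left_le)
  thus "p * q ^ j < 1" using p by simp
  show "0 \<le> p * q ^ j" using p q by simp
qed

lemma AA_lt1: "1 - AA p q j > 0"
  unfolding AA_def using qinf_lt[OF q p, of j] Pinf_pos[of j] by (simp add: field_simps)

lemma AA_rel: "(1 - q ^ j) / (1 - p * q ^ j) * AA p q (j + 1) = AA p q j"
proof -
  have a: "qpoch_inf (q ^ j) q = (1 - q ^ j) * qpoch_inf (q ^ (j+1)) q"
    using qinf_step[OF q, of "q ^ j"] by (simp add: mult_ac)
  have b: "qpoch_inf (p * q ^ j) q = (1 - p * q ^ j) * qpoch_inf (p * q ^ (j+1)) q"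
    using qinf_step[OF q, of "p * q ^ j"] by (simp add: mult_ac)
  have "1 - p * q ^ j > 0" using Pinf_pos[of j] Pinf_pos[of "j+1"] b by (simp add: zero_less_mult_iff)
  thus ?thesis unfolding AA_def a b using Pinf_pos[of "j+1"] by (simp add: field_simps)
qed

lemma AA_fin: "AA p q (n + 1) * (qpoch q q n / qpoch (p * q) q n) = qpoch_inf q q / qpoch_inf (p * q) q"
proof -
  have a: "qpoch_inf q q = qpoch q q n * qpoch_inf (q ^ (n+1)) q"
    using qinf_split[OF q, of q n] by (simp add: mult_ac)
  have b: "qpoch_inf (p * q) q = qpoch (p * q) q n * qpoch_inf (p * q ^ (n+1)) q"
    using qinf_split[OF q, of "p * q" n] by (simp add: mult_ac)
  have pq: "qpoch (p * q) q n > 0"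
    by (rule qpoch_pos[OF q]) (smt (verit) mult_left_le p q)
  show ?thesis unfolding AA_def a b using pq Pinf_pos[of "n+1"] by (simp add: field_simps)
qed

lemma gk_n0: "gk p q n 0 = 1"
  unfolding gk_def qbinom_def using qqpos[OF q, of n] q by simp

lemma gt_n0: "gt p q n 0 = 1"
  unfolding gt_def using gk_n0 by simp

lemma orth_til:
  assumes mn: "m \<le> n"
  shows "(\<Sum>k\<le>n. sw_moment_mod p q (m + k) * gt p q n k)
       = (if m = n then (1 - AA p q (n + 1)) * HH q n else 0)"
proof -
  have split: "(\<Sum>k\<le>n. u (m + k) * gt p q n k)
      = (\<Sum>k\<le>n. u (m + k) * gk p q n k)
        - AA p q (n + 1) * (\<Sum>k\<le>n. u (m + k) * (gk p q n k * ((1 - q ^ k) / (1 - p * q ^ k))))" for u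
    unfolding gt_def by (simp add: sum_distrib_left sum_subtractf algebra_simps)
  show ?thesis
  proof (cases m)
    case (Suc m')
    have "(\<Sum>k\<le>n. sw_moment_mod p q (m + k) * gt p q n k) = (\<Sum>k\<le>n. sw_moment p q (m + k) * gt p q n k)"
      using Suc by (intro sum.cong) (auto simp: sw_moment_mod_def)
    also have "\<dots> = (if m = n then (1 - AA p q (n + 1)) * HH q n else 0)"
    proof (cases "Suc m' = n")
      case True
      thus ?thesis unfolding split using sumG[OF mn] sumR[of m' n] mn Suc
        by (simp add: HH_def algebra_simps)
    next
      case False
      thus ?thesis unfolding split using sumG[OF mn] sumR[of m' n] mn Suc
        by simp
    qed
    finally show ?thesis .
  next
    case 0
    show ?thesis
    proof (cases n)
      case 0
      have "sw_moment_mod p q 0 = q powr (-1/2) * (1 - AA p q 1)"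
        unfolding sw_moment_mod_def AA_def by simp
      thus ?thesis using \<open>m = 0\<close> 0 gt_n0 by (simp add: HH_def)
    next
      case (Suc N)
      have "(\<Sum>k\<le>n. sw_moment_mod p q (m + k) * gt p q n k)
          = (\<Sum>k\<le>n. sw_moment p q k * gt p q n k + (if k = 0 then (sw_moment_mod p q 0 - sw_moment p q 0) * gt p q n 0 else 0))"
        using \<open>m = 0\<close> by (intro sum.cong) (auto simp: sw_moment_mod_def algebra_simps)
      also have "\<dots> = (\<Sum>k\<le>n. sw_moment p q (0 + k) * gt p q n k) + (sw_moment_mod p q 0 - sw_moment p q 0)"
        by (simp add: sum.distrib gt_n0)
      also have "(\<Sum>k\<le>n. sw_moment p q (0 + k) * gt p q n k)
          = - AA p q (n + 1) * (q powr (-1/2) * (- qpoch q q n / qpoch (p * q) q n))"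
        unfolding split[of "sw_moment p q", unfolded \<open>m = 0\<close>] using sumG[of 0 n] sumR0[of N] Suc by simp
      also have "sw_moment_mod p q 0 - sw_moment p q 0 = - (q powr (-1/2)) * (qpoch_inf q q / qpoch_inf (p * q) q)"
        unfolding sw_moment_mod_def sw_moment_def by (simp add: algebra_simps)
      also have "- AA p q (n + 1) * (q powr (-1/2) * (- qpoch q q n / qpoch (p * q) q n))
           + - (q powr (-1/2)) * (qpoch_inf q q / qpoch_inf (p * q) q) = 0"
      proof -
        have e: "- x * (c * (- a / b)) + - c * r = c * (x * (a / b) - r)" for a b c r x :: real
          by (simp add: algebra_simps minus_divide_left[symmetric])
        show ?thesis unfolding e AA_fin by simp
      qed
      finally show ?thesis using Suc \<open>m = 0\<close> by simp
    qed
  qed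
qed

end

context
  fixes p q :: real
  assumes q: "0 < q" "q < 1" and p: "0 \<le> p" "p < 1"
begin

lemma pn_pos: "qpoch p q n > 0" using qpoch_pos[OF q p(2)] .

lemma gk_nn: "gk p q n n = (-1) ^ n * q powr (real n ^ 2 + real n / 2) / qpoch p q n"
  unfolding gk_def qbinom_def using qqpos[OF q, of n] by simp

lemma qr_formula: "qpoch ((1/q) ^ n) q n = (-1) ^ n * (1/q) ^ (Suc n choose 2) * qpoch q q n"
proof (induction n)
  case 0 thus ?case by (simp add: one_choose_two)
next
  case (Suc n)
  have e: "(1/q) ^ Suc n * q = (1/q) ^ n" using q by (simp add: field_simps)
  have "qpoch ((1/q) ^ Suc n) q (Suc n) = (1 - (1/q) ^ Suc n) * qpoch ((1/q) ^ n) q n"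
    by (simp only: qpoch_Suc' e)
  also have "\<dots> = (-1) ^ Suc n * (1/q) ^ (Suc (Suc n) choose 2) * qpoch q q (Suc n)"
    unfolding Suc choose2_Suc[of "Suc n"] using q
    by (simp add: qpoch_Suc power_add field_simps)
  finally show ?case .
qed

lemma V_formula: "gk p q n n * HH q n = q powr (- real n - 1/2) * qpoch q q n / qpoch p q n"
proof -
  have c: "(1/q) ^ (Suc n choose 2) = q powr (- real (Suc n choose 2))"
    using q by (simp add: powr_minus powr_realpow power_one_over inverse_eq_divide)
  have e: "real n ^ 2 + real n / 2 + (- (real (n + 1) ^ 2) / 2) + (- real (Suc n choose 2)) = - real n - 1/2"
  proof -
    have "2 * real (Suc n choose 2) = real (Suc n) * (real (Suc n) - 1)" by (rule two_choose2)
    hence "real (Suc n choose 2) = (real n * real n + real n) / 2" by (simp add: algebra_simps)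
    thus ?thesis by (simp add: power2_eq_square field_simps)
  qed
  have "gk p q n n * HH q n = ((-1) ^ n * (-1) ^ n) * (q powr (real n ^ 2 + real n / 2) *
      q powr (- (real (n + 1) ^ 2) / 2) * q powr (- real (Suc n choose 2))) * qpoch q q n / qpoch p q n"
    unfolding gk_nn HH_def qr_formula c by (simp add: algebra_simps)
  also have "\<dots> = q powr (- real n - 1/2) * qpoch q q n / qpoch p q n"
    unfolding powr_add[symmetric] e by (simp add: power_mult_distrib[symmetric])
  finally show ?thesis .
qed

lemma V_pos: "gk p q n n * HH q n > 0"
  unfolding V_formula using qqpos[OF q, of n] pn_pos[of n] q by simp

lemma sgk: "(-1) ^ n * gk p q n n > 0"
  unfolding gk_nn using pn_pos[of n] q by (simp add: power_mult_distrib[symmetric])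

lemma gk_nz: "gk p q n n \<noteq> 0" using sgk[of n] by auto

lemma s_orth:
  assumes "i \<le> n"
  shows "(\<Sum>j\<le>n. sw_moment p q (i + j) * (gk p q n j / gk p q n n))
       = (if i = n then HH q n / gk p q n n else 0)"
proof -
  have "(\<Sum>j\<le>n. sw_moment p q (i + j) * (gk p q n j / gk p q n n))
      = (\<Sum>j\<le>n. sw_moment p q (i + j) * gk p q n j) / gk p q n n"
    by (simp add: sum_divide_distrib)
  thus ?thesis unfolding sumG[OF q p assms] by (simp add: HH_def)
qed

lemma hd_s: "hankel_det (sw_moment p q) n = (HH q n / gk p q n n) * hankel_det_prev (sw_moment p q) n"
proof -
  have "hankel_det (sw_moment p q) n = (\<Sum>j\<le>n. sw_moment p q (n + j) * (gk p q n j / gk p q n n)) * hankel_det_prev (sw_moment p q) n"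
    by (rule hankel_step(1)) (use gk_nz s_orth in auto)
  thus ?thesis using s_orth[of n n] by simp
qed

lemma gt_nn: "gt p q n n = gk p q n n * (1 - AA p q n)"
  unfolding gt_def AA_rel[OF q p] ..

lemma gt_nz: "gt p q n n \<noteq> 0" using gt_nn gk_nz AA_lt1[OF q p, of n] by simp

definition "ht n = (1 - AA p q (n + 1)) * HH q n / gt p q n n"

lemma t_orth:
  assumes "i \<le> n"
  shows "(\<Sum>j\<le>n. sw_moment_mod p q (i + j) * (gt p q n j / gt p q n n))
       = (if i = n then ht n else 0)"
proof -
  have "(\<Sum>j\<le>n. sw_moment_mod p q (i + j) * (gt p q n j / gt p q n n))
      = (\<Sum>j\<le>n. sw_moment_mod p q (i + j) * gt p q n j) / gt p q n n"
    by (simp add: sum_divide_distrib)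
  thus ?thesis unfolding orth_til[OF q p assms] by (simp add: ht_def)
qed

lemma hd_t: "hankel_det (sw_moment_mod p q) n = ht n * hankel_det_prev (sw_moment_mod p q) n"
proof -
  have "hankel_det (sw_moment_mod p q) n = (\<Sum>j\<le>n. sw_moment_mod p q (n + j) * (gt p q n j / gt p q n n)) * hankel_det_prev (sw_moment_mod p q) n"
    by (rule hankel_step(1)) (use gt_nz t_orth in auto)
  thus ?thesis using t_orth[of n n] by simp
qed

lemma ht_eq: "ht n = (1 - AA p q (n + 1)) * (gk p q n n * HH q n) / ((gk p q n n)^2 * (1 - AA p q n))"
proof -
  have g: "b*H/(G*a) = b*(G*H)/(G^2*a)" if "G \<noteq> 0" "a \<noteq> 0" for a b G H :: real
    using that by (simp add: power2_eq_square field_simps)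
  show ?thesis unfolding ht_def gt_nn
    by (rule g) (use gk_nz[of n] AA_lt1[OF q p, of n] in auto)
qed

lemma ht_pos: "ht n > 0"
  unfolding ht_eq using V_pos[of n] AA_lt1[OF q p, of n] AA_lt1[OF q p, of "n+1"] gk_nz[of n]
  by (simp add: zero_less_mult_iff)

lemma hd_rel: "hankel_det (sw_moment_mod p q) n = (1 - AA p q (n + 1)) * hankel_det (sw_moment p q) n"
proof (induction n)
  case 0
  have "ht 0 = (1 - AA p q 1) * (HH q 0 / gk p q 0 0)"
    unfolding ht_def gt_nn AA0[OF q p] by simp
  thus ?case using hd_t[of 0] hd_s[of 0] by (simp add: hankel_det_prev_def)
next
  case (Suc n)
  have a: "1 - AA p q (Suc n) \<noteq> 0" using AA_lt1[OF q p, of "Suc n"] by simp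
  have "ht (Suc n) * (1 - AA p q (Suc n)) = (1 - AA p q (Suc n + 1)) * (HH q (Suc n) / gk p q (Suc n) (Suc n))"
  proof -
    have g: "b*H/(G*a) * a = b*(H/G)" if "a \<noteq> 0" for a b G H :: real
      using that by (cases "G = 0") (simp_all add: field_simps)
    show ?thesis unfolding ht_def gt_nn by (rule g) (use a in auto)
  qed
  note X = this
  have "hankel_det (sw_moment_mod p q) (Suc n) = ht (Suc n) * hankel_det (sw_moment_mod p q) n"
    using hd_t[of "Suc n"] by (simp add: hankel_det_prev_def)
  also have "\<dots> = (ht (Suc n) * (1 - AA p q (Suc n))) * hankel_det (sw_moment p q) n"
    unfolding Suc by (simp add: mult.assoc)
  also have "\<dots> = (1 - AA p q (Suc n + 1)) * ((HH q (Suc n) / gk p q (Suc n) (Suc n)) * hankel_det (sw_moment p q) n)"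
    unfolding X by (simp add: mult.assoc)
  also have "\<dots> = (1 - AA p q (Suc n + 1)) * hankel_det (sw_moment p q) (Suc n)"
    using hd_s[of "Suc n"] by (simp add: hankel_det_prev_def)
  finally show ?case .
qed

lemma hd_t_pos: "hankel_det (sw_moment_mod p q) n > 0"
proof (induction n)
  case 0 thus ?case using hd_t[of 0] ht_pos[of 0] by (simp add: hankel_det_prev_def)
next
  case (Suc n) thus ?case using hd_t[of "Suc n"] ht_pos[of "Suc n"] by (simp add: hankel_det_prev_def)
qed

lemma prev_t_pos: "hankel_det_prev (sw_moment_mod p q) n > 0"
  unfolding hankel_det_prev_def using hd_t_pos by auto

lemma coeff_t:
  assumes "k \<le> n"
  shows "coeff (orthonormal_poly (sw_moment_mod p q) n) k = (gt p q n k / gt p q n n) / sqrt (ht n)"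
proof -
  have "coeff (orthonormal_poly (sw_moment_mod p q) n) k
      = (gt p q n k / gt p q n n) / sqrt (\<Sum>j\<le>n. sw_moment_mod p q (n + j) * (gt p q n j / gt p q n n))"
    by (rule ortho_coeff) (use gt_nz t_orth[of _ n] prev_t_pos ht_pos assms in auto)
  thus ?thesis using t_orth[of n n] by simp
qed

end

definition CtD :: "real \<Rightarrow> real \<Rightarrow> nat \<Rightarrow> real" where
  "CtD p q = (\<lambda>n::nat. (-1) ^ n * q powr (real n / 2 + 1/4) * sqrt (qpoch p q n / qpoch q q n)
      * ((1 - qpoch_inf (q ^ n) q / qpoch_inf (p * q ^ n) q)
         * (1 - qpoch_inf (q ^ (n + 1)) q / qpoch_inf (p * q ^ (n + 1)) q)) powr (-1/2))"

lemma powr_sq: "0 < x \<Longrightarrow> (x powr r)^2 = x powr (2 * r)"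
  for x r :: real by (simp add: power2_eq_square powr_add[symmetric])

context
  fixes p q :: real
  assumes q: "0 < q" "q < 1" and p: "0 \<le> p" "p < 1"
begin

lemma CtD_alt: "CtD p q n = (-1) ^ n * q powr (real n / 2 + 1/4) *
   (sqrt (qpoch p q n / qpoch q q n) * ((1 - AA p q n) * (1 - AA p q (n + 1))) powr (-1/2))"
  unfolding CtD_def AA_def by simp

lemma K1: "gt p q n n * sqrt (ht p q n) * CtD p q n = 1"
proof -
  define s :: real where "s = (-1) ^ n"
  define G where "G = gk p q n n"
  define a where "a = 1 - AA p q n"
  define a' where "a' = 1 - AA p q (n + 1)"
  define V where "V = G * HH q n"
  define B where "B = sqrt (qpoch p q n / qpoch q q n) * (a * a') powr (-1/2)"
  have ss: "s * s = 1" unfolding s_def by (simp add: power_mult_distrib[symmetric])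
  have sG: "s * G > 0" unfolding s_def G_def by (rule sgk[OF q p])
  have G0: "G \<noteq> 0" using sG by auto
  have a0: "a > 0" "a' > 0" unfolding a_def a'_def using AA_lt1[OF q p] by auto
  have V: "V = q powr (- real n - 1/2) * qpoch q q n / qpoch p q n" unfolding V_def G_def by (rule V_formula[OF q p])
  have Qp: "qpoch q q n > 0" "qpoch p q n > 0" using qqpos[OF q] pn_pos[OF q p] by auto
  have htp: "ht p q n > 0" by (rule ht_pos[OF q p])
  have hte: "ht p q n = a' * V / (G^2 * a)" unfolding a_def a'_def V_def G_def by (rule ht_eq[OF q p])
  have B0: "B > 0" unfolding B_def using Qp a0 by simp
  have Ct: "CtD p q n = s * q powr (real n / 2 + 1/4) * B" unfolding CtD_alt s_def B_def a_def a'_def ..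
  have gt: "gt p q n n = G * a" unfolding gt_nn[OF q p] G_def a_def ..
  define Z where "Z = (s * G * a * sqrt (ht p q n)) * (s * CtD p q n)"
  have Zpos: "Z > 0" unfolding Z_def Ct using sG a0 htp B0 q ss
    by (simp add: mult.assoc[symmetric])
  have B2: "B^2 = (qpoch p q n / qpoch q q n) * (a * a') powr (-1)"
    unfolding B_def power_mult_distrib using Qp a0 by (simp add: powr_sq)
  have Z2: "Z^2 = 1"
  proof -
    have s2: "s^2 = 1" using ss by (simp add: power2_eq_square)
    have "Z^2 = G^2 * a^2 * ht p q n * (q powr (real n / 2 + 1/4))^2 * B^2"
      unfolding Z_def Ct using htp s2 by (simp add: power_mult_distrib mult_ac)
    also have "\<dots> = (G^2 * a^2 * (a' * V / (G^2 * a))) * q powr (real n + 1/2) * ((qpoch p q n / qpoch q q n) * (a * a') powr (-1))"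
      unfolding hte B2 using q by (simp add: powr_sq algebra_simps)
    also have "\<dots> = (a * a' * V) * q powr (real n + 1/2) * ((qpoch p q n / qpoch q q n) / (a * a'))"
      using sG a0 G0 by (simp add: powr_minus_divide power2_eq_square field_simps)
    also have "\<dots> = (q powr (- real n - 1/2) * q powr (real n + 1/2)) * ((qpoch q q n / qpoch p q n) * (qpoch p q n / qpoch q q n))"
      unfolding V using a0 by (simp add: field_simps)
    also have "\<dots> = 1" using Qp q by (simp add: powr_add[symmetric])
    finally show ?thesis .
  qed
  have "Z = 1" using power2_eq_imp_eq[of Z 1] Z2 Zpos by simp
  moreover have "Z = gt p q n n * sqrt (ht p q n) * CtD p q n"
    unfolding Z_def gt using ss by (simp add: mult_ac)
  ultimately show ?thesis by simp
qed


lemma Delta_pos: "Delta p q j > 0"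
  unfolding Delta_def using qinf_lt[OF q p, of j] by simp

lemma oneAA: "1 - AA p q j = Delta p q j / qpoch_inf (p * q ^ j) q"
  unfolding AA_def Delta_def using Pinf_pos[OF q p, of j] by (simp add: field_simps)

lemma Pinf_step: "qpoch_inf (p * q ^ n) q = (1 - p * q ^ n) * qpoch_inf (p * q ^ (n + 1)) q"
  using qinf_step[OF q, of "p * q ^ n"] by (simp add: mult_ac)

lemma Ct2: "CtD p q n = (-1) ^ n * q powr (real n / 2 + 1/4) * sqrt (qpoch p q (n + 1) / qpoch q q n)
                      * qpoch_inf (p * q ^ (n + 1)) q / sqrt (Delta p q n * Delta p q (n + 1))"
proof -
  define P where "P = qpoch_inf (p * q ^ n) q"
  define P' where "P' = qpoch_inf (p * q ^ (n + 1)) q"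
  define D where "D = Delta p q n"
  define D' where "D' = Delta p q (n + 1)"
  define c where "c = 1 - p * q ^ n"
  have pos: "P > 0" "P' > 0" "D > 0" "D' > 0" "qpoch p q n > 0" "qpoch q q n > 0"
    unfolding P_def P'_def D_def D'_def using Pinf_pos[OF q p, of n] Pinf_pos[OF q p, of "n+1"]
      Delta_pos[of n] Delta_pos[of "n+1"] qqpos[OF q, of n] pn_pos[OF q p, of n] by auto
  have Pc: "P = c * P'" unfolding P_def P'_def c_def by (rule Pinf_step)
  have c0: "c > 0" using pos Pc by (simp add: zero_less_mult_iff)
  have pn1: "qpoch p q (n + 1) = qpoch p q n * c" unfolding c_def by (simp add: qpoch_Suc)
  define L where "L = sqrt (qpoch p q n / qpoch q q n) * ((1 - AA p q n) * (1 - AA p q (n + 1))) powr (-1/2)"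
  define R where "R = sqrt (qpoch p q (n + 1) / qpoch q q n) * P' / sqrt (D * D')"
  have aa: "(1 - AA p q n) * (1 - AA p q (n + 1)) = (D * D') / (P * P')"
    unfolding oneAA D_def D'_def P_def P'_def by simp
  have aap: "(D * D') / (P * P') > 0" using pos by simp
  have L0: "L > 0" unfolding L_def aa using pos aap by simp
  have R0: "R > 0" unfolding R_def pn1 using pos c0 by simp
  have "L^2 = (qpoch p q n / qpoch q q n) * ((D * D') / (P * P')) powr (-1)"
    unfolding L_def aa power_mult_distrib using pos aap by (simp add: powr_sq)
  also have "\<dots> = (qpoch p q n / qpoch q q n) * ((P * P') / (D * D'))"
    using aap pos by (simp add: powr_minus_divide)
  also have "\<dots> = R^2"
    unfolding R_def power_mult_distrib power_divide pn1 Pc using pos c0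
    by (simp add: power2_eq_square field_simps)
  finally have "L = R" using power2_eq_imp_eq L0 R0 by (meson less_imp_le)
  thus ?thesis unfolding CtD_alt L_def R_def P'_def D_def D'_def by (simp add: mult_ac)
qed

end

theorem theorem4:
  fixes p q :: real
  assumes "0 < q" "q < 1" "0 \<le> p" "p < 1"
  defines "Ct \<equiv> \<lambda>n::nat. (-1) ^ n * q powr (real n / 2 + 1/4) * sqrt (qpoch p q n / qpoch q q n)
      * ((1 - qpoch_inf (q ^ n) q / qpoch_inf (p * q ^ n) q)
         * (1 - qpoch_inf (q ^ (n + 1)) q / qpoch_inf (p * q ^ (n + 1)) q)) powr (-1/2)"
  shows "(\<forall>n k. k \<le> n \<longrightarrow>
            coeff (orthonormal_poly (sw_moment_mod p q) n) k =
              Ct n * (-1) ^ k * qbinom n k q * q powr (real k ^ 2 + real k / 2) / qpoch p q k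
              * (1 - (1 - q ^ k) / (1 - p * q ^ k)
                     * (qpoch_inf (q ^ (n + 1)) q / qpoch_inf (p * q ^ (n + 1)) q)))
       \<and> (\<forall>n. Ct n = (-1) ^ n * q powr (real n / 2 + 1/4) * sqrt (qpoch p q (n + 1) / qpoch q q n)
                      * qpoch_inf (p * q ^ (n + 1)) q / sqrt (Delta p q n * Delta p q (n + 1)))
       \<and> (\<forall>n k. k \<le> n \<longrightarrow>
            coeff (orthonormal_poly (sw_moment_mod p q) n) k =
              sw_coeff p q k n
              * (qpoch_inf (p * q ^ (n + 1)) q - (1 - q ^ k) / (1 - p * q ^ k) * qpoch_inf (q ^ (n + 1)) q)
              * sqrt ((1 - p * q ^ n) / (Delta p q n * Delta p q (n + 1))))
       \<and> (\<forall>n. hankel_det (sw_moment_mod p q) n =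
              Delta p q (n + 1) / qpoch_inf (p * q ^ (n + 1)) q * hankel_det (sw_moment p q) n)"
proof -
  note q = assms(1,2) and p = assms(3,4)
  have CtE: "Ct = CtD p q" unfolding Ct_def CtD_def ..
  have coef: "coeff (orthonormal_poly (sw_moment_mod p q) n) k = CtD p q n * gt p q n k" if "k \<le> n" for n k
  proof -
    have "coeff (orthonormal_poly (sw_moment_mod p q) n) k = gt p q n k * (1 / (gt p q n n * sqrt (ht p q n)))"
      unfolding coeff_t[OF q p that] by (simp add: field_simps)
    also have "1 / (gt p q n n * sqrt (ht p q n)) = CtD p q n"
    proof -
      have k: "gt p q n n * sqrt (ht p q n) * CtD p q n = 1" by (rule K1[OF q p])
      hence "gt p q n n * sqrt (ht p q n) \<noteq> 0" by auto
      with k show ?thesis by (simp add: field_simps)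
    qed
    finally show ?thesis by simp
  qed
  have C1: "\<forall>n k. k \<le> n \<longrightarrow>
            coeff (orthonormal_poly (sw_moment_mod p q) n) k =
              Ct n * (-1) ^ k * qbinom n k q * q powr (real k ^ 2 + real k / 2) / qpoch p q k
              * (1 - (1 - q ^ k) / (1 - p * q ^ k)
                     * (qpoch_inf (q ^ (n + 1)) q / qpoch_inf (p * q ^ (n + 1)) q))"
    unfolding CtE using coef by (simp add: gt_def gk_def AA_def)
  have C2: "\<forall>n. Ct n = (-1) ^ n * q powr (real n / 2 + 1/4) * sqrt (qpoch p q (n + 1) / qpoch q q n)
                      * qpoch_inf (p * q ^ (n + 1)) q / sqrt (Delta p q n * Delta p q (n + 1))"
    unfolding CtE using Ct2[OF q p] by blast
  have C3: "\<forall>n k. k \<le> n \<longrightarrow>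
            coeff (orthonormal_poly (sw_moment_mod p q) n) k =
              sw_coeff p q k n
              * (qpoch_inf (p * q ^ (n + 1)) q - (1 - q ^ k) / (1 - p * q ^ k) * qpoch_inf (q ^ (n + 1)) q)
              * sqrt ((1 - p * q ^ n) / (Delta p q n * Delta p q (n + 1)))"
  proof (intro allI impI)
    fix n k :: nat assume k: "k \<le> n"
    define P' where "P' = qpoch_inf (p * q ^ (n + 1)) q"
    define b where "b = (1 - q ^ k) / (1 - p * q ^ k)"
    define DD where "DD = Delta p q n * Delta p q (n + 1)"
    define c where "c = 1 - p * q ^ n"
    have P'0: "P' > 0" unfolding P'_def by (rule Pinf_pos[OF q p])
    have c0: "c \<ge> 0"
    proof -
      have "q ^ n \<le> 1" using q by (simp add: power_le_one)
      hence "p * q ^ n \<le> p" using p by (simp add: mult_left_le)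
      thus ?thesis unfolding c_def using p by simp
    qed
    have pn1: "qpoch p q (n + 1) = qpoch p q n * c" unfolding c_def by (simp add: qpoch_Suc)
    have Qp: "qpoch q q n > 0" "qpoch p q n > 0" using qqpos[OF q] pn_pos[OF q p] by auto
    have sq: "sqrt (qpoch p q (n + 1) / qpoch q q n) = sqrt (qpoch p q n / qpoch q q n) * sqrt c"
      unfolding pn1 by (simp add: real_sqrt_mult[symmetric] field_simps)
    have sq2: "sqrt (c / DD) = sqrt c / sqrt DD" by (simp add: real_sqrt_divide)
    have AAe: "P' * (1 - b * AA p q (n + 1)) = P' - b * qpoch_inf (q ^ (n + 1)) q"
      unfolding AA_def P'_def[symmetric] using P'0 by (simp add: field_simps)
    have "coeff (orthonormal_poly (sw_moment_mod p q) n) k = CtD p q n * gt p q n k" by (rule coef[OF k])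
    also have "\<dots> = ((-1) ^ n * q powr (real n / 2 + 1/4) * sqrt (qpoch p q n / qpoch q q n)) * gk p q n k
          * (P' * (1 - b * AA p q (n + 1))) * (sqrt c / sqrt DD)"
      unfolding Ct2[OF q p] sq gt_def b_def[symmetric] P'_def[symmetric] DD_def[symmetric]
      by (simp add: mult_ac)
    also have "\<dots> = sw_coeff p q k n * (P' - b * qpoch_inf (q ^ (n + 1)) q) * sqrt (c / DD)"
      unfolding AAe sq2 sw_coeff_def gk_def by (simp add: mult_ac)
    finally show "coeff (orthonormal_poly (sw_moment_mod p q) n) k =
              sw_coeff p q k n
              * (qpoch_inf (p * q ^ (n + 1)) q - (1 - q ^ k) / (1 - p * q ^ k) * qpoch_inf (q ^ (n + 1)) q)
              * sqrt ((1 - p * q ^ n) / (Delta p q n * Delta p q (n + 1)))"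
      unfolding P'_def b_def c_def DD_def .
  qed
  have C4: "\<forall>n. hankel_det (sw_moment_mod p q) n =
              Delta p q (n + 1) / qpoch_inf (p * q ^ (n + 1)) q * hankel_det (sw_moment p q) n"
    using hd_rel[OF q p] oneAA[OF q p] by simp
  show ?thesis using C1 C2 C3 C4 by blast
qed

end
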